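(* Let $m\ge1$ and $x_{i,j}\in[-1,1]$ for $i\in[m]$, $j\in[m+1]$. Then for any $a\in\mathbb{R}^m$ there exists a subset $S\subseteq[m+1]$ with $|S|\le m$ such that \[\Big|\sum_{i=1}^m a_i\prod_{j\in S}x_{i,j}\Big|\ge\frac{1}{2^m-1}\Big|\sum_{i=1}^m a_i\prod_{j=1}^{m+1}x_{i,j}\Big|.\]
   Context: An empty product equals $1$. *)

theory Defs
  imports Main Complex_Main
begin

end

theory Submission
  imports Defs
begin

theorem lemma8:
  fixes m :: nat and x :: "nat \<Rightarrow> nat \<Rightarrow> real" and a :: "nat \<Rightarrow> real"
  assumes "m \<ge> 1"
    and "\<And>i j. i \<in> {1..m} \<Longrightarrow> j \<in> {1..m+1} \<Longrightarrow> \<bar>x i j\<bar> \<le> 1"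
  shows "\<exists>S. S \<subseteq> {1..m+1} \<and> card S \<le> m \<and>
    \<bar>\<Sum>i=1..m. a i * (\<Prod>j\<in>S. x i j)\<bar> \<ge>
      (1 / (2 ^ m - 1)) * \<bar>\<Sum>i=1..m. a i * (\<Prod>j=1..m+1. x i j)\<bar>"
proof (rule ccontr)
  assume H: "\<not> ?thesis"
  define M where "M = {1..m}"
  define c where "c T = (\<Prod>j\<in>M-T. - x j j)" for T
  define g where "g T = (\<Sum>i=1..m. a i * (\<Prod>j\<in>insert (m+1) T. x i j))" for T
  define r where "r = (1 / (2 ^ m - 1)) * \<bar>\<Sum>i=1..m. a i * (\<Prod>j=1..m+1. x i j)\<bar>"
  have fM: "finite M" by (simp add: M_def)
  have gT: "g T = (\<Sum>i=1..m. a i * x i (m+1) * (\<Prod>j\<in>T. x i j))" if "T \<subseteq> M" for T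
  proof -
    have "finite T" using that fM finite_subset by blast
    moreover have "m+1 \<notin> T" using that by (auto simp: M_def)
    ultimately show ?thesis unfolding g_def by (simp add: mult.assoc)
  qed
  have gM: "g M = (\<Sum>i=1..m. a i * (\<Prod>j=1..m+1. x i j))"
  proof -
    have "{1..m+1} = insert (m+1) M" by (auto simp: M_def)
    then show ?thesis by (simp add: g_def)
  qed
  have row0: "(\<Sum>T\<in>Pow M. (\<Prod>j\<in>T. x i j) * c T) = 0" if "i \<in> {1..m}" for i
  proof -
    have "(\<Prod>j\<in>M. x i j + - x j j) = 0"
      using that fM by (auto simp: M_def prod_zero_iff)
    then show ?thesis using prod_add[OF fM, of "\<lambda>j. x i j" "\<lambda>j. - x j j"]
      by (simp add: c_def)
  qed
  have tot: "(\<Sum>T\<in>Pow M. g T * c T) = 0"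
  proof -
    have "(\<Sum>T\<in>Pow M. g T * c T) = (\<Sum>T\<in>Pow M. \<Sum>i=1..m. a i * x i (m+1) * ((\<Prod>j\<in>T. x i j) * c T))"
      by (rule sum.cong) (auto simp: gT sum_distrib_right mult.assoc)
    also have "\<dots> = (\<Sum>i=1..m. a i * x i (m+1) * (\<Sum>T\<in>Pow M. (\<Prod>j\<in>T. x i j) * c T))"
      by (subst sum.swap) (simp add: sum_distrib_left)
    also have "\<dots> = 0" by (simp add: row0)
    finally show ?thesis .
  qed
  let ?P = "Pow M - {M}"
  have cM: "c M = 1" by (simp add: c_def)
  have fP: "finite ?P" using fM by simp
  have split: "(\<Sum>T\<in>Pow M. g T * c T) = g M * c M + (\<Sum>T\<in>?P. g T * c T)"
    using fM by (subst sum.remove[of _ M]) auto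
  have eq: "g M = - (\<Sum>T\<in>?P. g T * c T)" using tot split cM by simp
  have cle: "\<bar>c T\<bar> \<le> 1" for T
  proof -
    have "\<bar>c T\<bar> = (\<Prod>j\<in>M-T. \<bar>x j j\<bar>)" by (simp add: c_def abs_prod)
    also have "\<dots> \<le> 1"
      by (rule prod_le_1) (use assms(2) in \<open>auto simp: M_def\<close>)
    finally show ?thesis .
  qed
  have le1: "\<bar>g M\<bar> \<le> (\<Sum>T\<in>?P. \<bar>g T\<bar>)"
  proof -
    have "\<bar>g M\<bar> \<le> (\<Sum>T\<in>?P. \<bar>g T * c T\<bar>)" unfolding eq abs_minus_cancel by (rule sum_abs)
    also have "\<dots> \<le> (\<Sum>T\<in>?P. \<bar>g T\<bar>)"
    proof (rule sum_mono)
      fix T show "\<bar>g T * c T\<bar> \<le> \<bar>g T\<bar>"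
        using cle[of T] by (simp add: abs_mult mult_left_le)
    qed
    finally show ?thesis .
  qed
  have small: "\<bar>g T\<bar> < r" if "T \<in> ?P" for T
  proof -
    have TM: "T \<subseteq> M" "T \<noteq> M" using that by auto
    have "card T < card M" using TM fM by (meson psubsetI psubset_card_mono)
    then have "card T < m" by (simp add: M_def)
    moreover have "finite T" using TM fM finite_subset by blast
    ultimately have "card (insert (m+1) T) \<le> m" by (simp add: card_insert_if)
    moreover have "insert (m+1) T \<subseteq> {1..m+1}" using TM by (auto simp: M_def)
    ultimately show ?thesis using H unfolding g_def r_def by auto
  qed
  have cardP: "card ?P = 2 ^ m - 1"
    using fM by (simp add: card_Diff_subset card_Pow M_def)
  have neP: "?P \<noteq> {}"
    using assms(1) by (auto simp: M_def intro!: exI[of _ "{}"])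
  have "(\<Sum>T\<in>?P. \<bar>g T\<bar>) < (\<Sum>T\<in>?P. r)"
    by (rule sum_strict_mono[OF fP neP]) (use small in auto)
  also have "\<dots> = (2 ^ m - 1) * r" using cardP assms(1)
    by (simp add: of_nat_diff)
  also have "\<dots> = \<bar>g M\<bar>"
  proof -
    have "(2::real) ^ m \<ge> 2" using assms(1)
      by (metis power_one_right power_increasing one_le_numeral)
    then show ?thesis by (simp add: r_def gM)
  qed
  finally show False using le1 by simp
qed

end
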